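(* Let $W$ be a Banach space and $V=W^*$ its dual Banach space; write $(V,\|\cdot\|)$ for $V$ with the norm topology and $(V,w^* )$ for $V$ with the weak$^*$ topology. Let $X$ be a connected, locally connected, Hausdorff, normal, first countable topological space and $f:X\to V$ a map such that $f:X\to(V,\|\cdot\|)$ is continuous, has local convexity data and is locally fiber connected, and $f:X\to(V,w^* )$ is closed. Then $\tilde f:X_f\to V$ is a proper map with respect to both topologies on $V$, and for every $[x]\in X_f$ and $r>0$ the set $B_r([x]):=\{[y]\in X_f\mid d([x],[y])\le r\}$ is compact in $X_f$.
   Context: Local convexity data and local fiber connectedness are taken with respect to the norm topology of $V$. A subset $C\subset V$ is a cone with vertex $v_0$ if $v_0\in C$ and $(1-\lambda)v_0+\lambda v\in C$ for every $\lambda\ge 0$ and every $v\in C$, $v\ne v_0$; it is a convex cone if it is moreover convex. A continuous map $f:X\to V$ has local convexity data if for each $x\in X$ and every sufficiently small open neighborhood $U_x$ of $x$ there is a convex cone $C_x\subset V$ with vertex $f(x)$, endowed with the subspace topology from $V$, such that (VN) $f(U_x)\subset C_x$ and $f(U_x)$ is a neighborhood of $f(x)$ in $C_x$; and (SLO) $f|_{U_x}:U_x\to C_x$ is an open map, and for every neighborhood $U'_x\subset U_x$ of $x$ the set $f(U'_x)$ is a neighborhood of $f(x)$ in $C_x$. A subset $A\subset X$ satisfies condition (LFC) if for every $a\in A$, the set $A$ does not intersect two different connected components of the fiber $f^{-1}(f(a))$. The map $f$ is locally fiber connected if for every $x\in X$, every open neighborhood of $x$ contains a neighborhood $U_x$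 of $x$ satisfying (LFC). Declare $x\sim y$ in $X$ iff $f(x)=f(y)$ and $x,y$ lie in the same connected component of $f^{-1}(f(x))$; $X_f:=X/\!\sim$ with the quotient topology, $\pi_f:X\to X_f$ is the projection and $\tilde f:X_f\to V$ is the unique map with $\tilde f\circ\pi_f=f$. The distance $d$ on $X_f$: $d([x],[y])$ is the infimum of the lengths $l(\tilde f\circ\gamma)$, measured with the norm distance of $V$, over all continuous curves $\gamma:[a,b]\to X_f$ with $\gamma(a)=[x]$, $\gamma(b)=[y]$. A continuous map between Hausdorff spaces is proper if it is closed and all its fibers are compact. *)

theory Defs
  imports "HOL-Analysis.Analysis"
begin

definition weak_star_topology :: "('w::real_normed_vector \<Rightarrow>\<^sub>L real) topology" where
  "weak_star_topology =
     pullback_topology UNIV (\<lambda>\<phi> w. blinfun_apply \<phi> w) (product_topology (\<lambda>_. euclideanreal) UNIV)"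

definition nbhd_in :: "'a topology \<Rightarrow> 'a \<Rightarrow> 'a set \<Rightarrow> bool" where
  "nbhd_in T p S \<longleftrightarrow> (\<exists>G. openin T G \<and> p \<in> G \<and> G \<subseteq> S)"

definition is_cone_with_vertex :: "'v::real_vector set \<Rightarrow> 'v \<Rightarrow> bool" where
  "is_cone_with_vertex C v0 \<longleftrightarrow> v0 \<in> C \<and>
     (\<forall>t::real. \<forall>v\<in>C. t \<ge> 0 \<and> v \<noteq> v0 \<longrightarrow> (1 - t) *\<^sub>R v0 + t *\<^sub>R v \<in> C)"

definition is_convex_cone_with_vertex :: "'v::real_vector set \<Rightarrow> 'v \<Rightarrow> bool" where
  "is_convex_cone_with_vertex C v0 \<longleftrightarrow> is_cone_with_vertex C v0 \<and> convex C"

definition has_local_convexity_data :: "'a topology \<Rightarrow> ('a \<Rightarrow> 'v::real_normed_vector) \<Rightarrow> bool" where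
  "has_local_convexity_data X f \<longleftrightarrow>
     (\<forall>x\<in>topspace X. \<exists>N. openin X N \<and> x \<in> N \<and>
        (\<forall>U. openin X U \<and> x \<in> U \<and> U \<subseteq> N \<longrightarrow>
           (\<exists>C. is_convex_cone_with_vertex C (f x) \<and>
                f ` U \<subseteq> C \<and>
                nbhd_in (subtopology euclidean C) (f x) (f ` U) \<and>
                open_map (subtopology X U) (subtopology euclidean C) f \<and>
                (\<forall>U'. U' \<subseteq> U \<and> nbhd_in X x U' \<longrightarrow>
                       nbhd_in (subtopology euclidean C) (f x) (f ` U')))))"

definition fiber :: "'a topology \<Rightarrow> ('a \<Rightarrow> 'v) \<Rightarrow> 'v \<Rightarrow> 'a set" where
  "fiber X f v = {z \<in> topspace X. f z = v}"

definition LFC :: "'a topology \<Rightarrow> ('a \<Rightarrow> 'v) \<Rightarrow> 'a set \<Rightarrow> bool" where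
  "LFC X f A \<longleftrightarrow>
     (\<forall>a\<in>A. \<forall>y\<in>A. \<forall>z\<in>A. f y = f a \<and> f z = f a \<longrightarrow>
        connected_component_of (subtopology X (fiber X f (f a))) y z)"

definition locally_fiber_connected :: "'a topology \<Rightarrow> ('a \<Rightarrow> 'v) \<Rightarrow> bool" where
  "locally_fiber_connected X f \<longleftrightarrow>
     (\<forall>x\<in>topspace X. \<forall>G. openin X G \<and> x \<in> G \<longrightarrow>
        (\<exists>U. U \<subseteq> G \<and> nbhd_in X x U \<and> LFC X f U))"

definition fclass :: "'a topology \<Rightarrow> ('a \<Rightarrow> 'v) \<Rightarrow> 'a \<Rightarrow> 'a set" where
  "fclass X f x = {y. f y = f x \<and> connected_component_of (subtopology X (fiber X f (f x))) x y}"

definition Xf :: "'a topology \<Rightarrow> ('a \<Rightarrow> 'v) \<Rightarrow> 'a set set" where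
  "Xf X f = fclass X f ` topspace X"

definition quotient_topology :: "'a topology \<Rightarrow> ('a \<Rightarrow> 'b) \<Rightarrow> 'b topology" where
  "quotient_topology X p =
     topology (\<lambda>U. U \<subseteq> p ` topspace X \<and> openin X {x \<in> topspace X. p x \<in> U})"

definition Xf_topology :: "'a topology \<Rightarrow> ('a \<Rightarrow> 'v) \<Rightarrow> 'a set topology" where
  "Xf_topology X f = quotient_topology X (fclass X f)"

definition ftilde :: "('a \<Rightarrow> 'v) \<Rightarrow> 'a set \<Rightarrow> 'v" where
  "ftilde f c = f (SOME x. x \<in> c)"

definition curve_length :: "real \<Rightarrow> real \<Rightarrow> (real \<Rightarrow> 'v::real_normed_vector) \<Rightarrow> ereal" where
  "curve_length a b c =
     (SUP (n, t) \<in> {(n::nat, t::nat \<Rightarrow> real). t 0 = a \<and> t n = b \<and> (\<forall>i<n. t i \<le> t (Suc i))}.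
        ereal (\<Sum>i<n. norm (c (t (Suc i)) - c (t i))))"

definition Xf_dist :: "'a topology \<Rightarrow> ('a \<Rightarrow> 'v::real_normed_vector) \<Rightarrow> 'a set \<Rightarrow> 'a set \<Rightarrow> ereal" where
  "Xf_dist X f p q =
     (INF (a, b, \<gamma>) \<in> {(a, b, \<gamma>). a \<le> b \<and>
          continuous_map (subtopology euclideanreal {a..b}) (Xf_topology X f) \<gamma> \<and>
          \<gamma> a = p \<and> \<gamma> b = q}.
        curve_length a b (ftilde f \<circ> \<gamma>))"

end

theory Submission
  imports Defs
begin

lemma istopology_quot: "istopology (\<lambda>U. U \<subseteq> p ` topspace X \<and> openin X {x \<in> topspace X. p x \<in> U})"
proof -
  have 1: "{x \<in> topspace X. p x \<in> S \<inter> T} = {x \<in> topspace X. p x \<in> S} \<inter> {x \<in> topspace X. p x \<in> T}" for S T by auto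
  have 2: "{x \<in> topspace X. p x \<in> \<Union>K} = (\<Union>S\<in>K. {x \<in> topspace X. p x \<in> S})" for K by auto
  show ?thesis unfolding istopology_def 1 2 by auto
qed

lemma openin_quot: "openin (quotient_topology X p) U \<longleftrightarrow> U \<subseteq> p ` topspace X \<and> openin X {x \<in> topspace X. p x \<in> U}"
  unfolding quotient_topology_def by (simp add: topology_inverse'[OF istopology_quot])

lemma topspace_quot: "topspace (quotient_topology X p) = p ` topspace X"
proof -
  have e: "{x \<in> topspace X. p x \<in> p ` topspace X} = topspace X" by auto
  have "openin (quotient_topology X p) (p ` topspace X)" unfolding openin_quot e by auto
  then have "p ` topspace X \<subseteq> topspace (quotient_topology X p)" by (simp add: openin_subset)
  moreover have "topspace (quotient_topology X p) \<subseteq> p ` topspace X"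
    using openin_quot[of X p "topspace (quotient_topology X p)"] by simp
  ultimately show ?thesis by blast
qed

lemma closedin_quot: "closedin (quotient_topology X p) A \<longleftrightarrow> A \<subseteq> p ` topspace X \<and> closedin X {x \<in> topspace X. p x \<in> A}"
proof -
  have e: "{x \<in> topspace X. p x \<in> p ` topspace X - A} = topspace X - {x \<in> topspace X. p x \<in> A}" by auto
  show ?thesis unfolding closedin_def topspace_quot openin_quot e by auto
qed

lemma continuous_map_quot:
  assumes "continuous_map X Y (\<lambda>x. g (p x))"
  shows "continuous_map (quotient_topology X p) Y g"
  unfolding continuous_map_def
proof (intro conjI allI impI)
  show "g \<in> topspace (quotient_topology X p) \<rightarrow> topspace Y" using assms
    by (auto simp: topspace_quot continuous_map_def)
  fix U assume U: "openin Y U"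
  have "{x \<in> topspace X. p x \<in> {x \<in> topspace (quotient_topology X p). g x \<in> U}} = {x \<in> topspace X. g (p x) \<in> U}"
    by (auto simp: topspace_quot)
  then show "openin (quotient_topology X p) {x \<in> topspace (quotient_topology X p). g x \<in> U}"
    using assms U unfolding openin_quot continuous_map_def by (auto simp: topspace_quot)
qed

lemma continuous_map_quot_proj: "continuous_map X (quotient_topology X p) p"
  unfolding continuous_map_def
proof (intro conjI allI impI)
  show "p \<in> topspace X \<rightarrow> topspace (quotient_topology X p)" by (auto simp: topspace_quot)
  fix U assume "openin (quotient_topology X p) U"
  then show "openin X {x \<in> topspace X. p x \<in> U}" by (simp add: openin_quot)
qed

lemma fclass_self: "x \<in> topspace X \<Longrightarrow> x \<in> fclass X f x"
  unfolding fclass_def by (auto simp: connected_component_of_refl fiber_def)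

lemma fclass_mem: "y \<in> fclass X f x \<Longrightarrow> f y = f x \<and> x \<in> topspace X \<and> y \<in> topspace X"
proof -
  assume "y \<in> fclass X f x"
  then have "connected_component_of (subtopology X (fiber X f (f x))) x y" by (simp add: fclass_def)
  then have "x \<in> topspace (subtopology X (fiber X f (f x))) \<and> y \<in> topspace (subtopology X (fiber X f (f x)))"
    using connected_component_of_equiv by metis
  then show ?thesis by (simp add: fiber_def topspace_subtopology)
qed

lemma fclass_eqI:
  assumes "connected_component_of (subtopology X (fiber X f (f x))) x y"
  shows "fclass X f y = fclass X f x"
proof -
  have "y \<in> topspace (subtopology X (fiber X f (f x)))"
    using assms connected_component_of_equiv by metis
  then have fy: "f y = f x" by (simp add: fiber_def topspace_subtopology)
  show ?thesis unfolding fclass_def fy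
    using assms connected_component_of_equiv
    by (metis (no_types, lifting) connected_component_of_sym)
qed

lemma fclass_eq_mem: "y \<in> fclass X f x \<Longrightarrow> fclass X f y = fclass X f x"
  by (rule fclass_eqI) (simp add: fclass_def)

lemma ftilde_fclass: "x \<in> topspace X \<Longrightarrow> ftilde f (fclass X f x) = f x"
  unfolding ftilde_def by (metis (no_types, lifting) fclass_self fclass_mem someI)

lemma fclass_eq_iff: "x \<in> topspace X \<Longrightarrow> fclass X f y = fclass X f x \<longleftrightarrow> y \<in> fclass X f x"
  by (metis fclass_eq_mem fclass_self fclass_mem emptyE equals0I)

lemma weak_star_eq: "(weak_star_topology :: ('w::real_normed_vector \<Rightarrow>\<^sub>L real) topology) = strong_operator_topology"
  unfolding weak_star_topology_def strong_operator_topology_def euclidean_product_topology ..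

lemma topspace_weak_star [simp]: "topspace weak_star_topology = UNIV"
  by (simp add: weak_star_eq strong_operator_topology_topspace)

lemma weak_star_open: "openin (weak_star_topology :: ('w::real_normed_vector \<Rightarrow>\<^sub>L real) topology) S \<Longrightarrow> open S"
proof -
  assume "openin weak_star_topology S"
  then have "openin euclidean {x \<in> topspace euclidean. x \<in> S}"
    using strong_operator_topology_weaker_than_euclidean unfolding weak_star_eq continuous_map_def by blast
  then show ?thesis by simp
qed

lemma weak_star_closed: "closedin (weak_star_topology :: ('w::real_normed_vector \<Rightarrow>\<^sub>L real) topology) S \<Longrightarrow> closed S"
  by (metis closed_open weak_star_open closedin_def topspace_weak_star Compl_eq_Diff_UNIV)

lemma continuous_map_weak_star:
  "continuous_map T euclidean g \<Longrightarrow> continuous_map T (weak_star_topology :: ('w::real_normed_vector \<Rightarrow>\<^sub>L real) topology) g"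
  unfolding weak_star_eq
  using continuous_map_compose[OF _ strong_operator_topology_weaker_than_euclidean] by (simp add: o_def)

lemma weak_star_cball_compact:
  fixes v0 :: "'w::real_normed_vector \<Rightarrow>\<^sub>L real"
  assumes r: "r \<ge> 0"
  shows "compactin weak_star_topology (cball v0 r)"
proof -
  define K where "K = {g::'w\<Rightarrow>real. (\<forall>x y. g (x + y) = g x + g y) \<and> (\<forall>c x. g (c *\<^sub>R x) = c * g x)
        \<and> (\<forall>w. \<bar>g w - v0 w\<bar> \<le> r * norm w)}"
  have cK: "closed K" unfolding K_def
    by (intro closed_Collect_conj closed_Collect_all closed_Collect_eq closed_Collect_le continuous_intros
        ; simp?)
  have "compactin (product_topology (\<lambda>_. euclideanreal) UNIV) (PiE UNIV (\<lambda>w. cball (v0 w) (r * norm w)))"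
    unfolding compactin_PiE by auto
  then have cP: "compact (PiE UNIV (\<lambda>w. cball (v0 w) (r * norm w)))"
    by (simp add: euclidean_product_topology)
  have "K \<subseteq> PiE UNIV (\<lambda>w. cball (v0 w) (r * norm w))"
    unfolding K_def by (auto simp: dist_real_def abs_minus_commute)
  then have "K = PiE UNIV (\<lambda>w. cball (v0 w) (r * norm w)) \<inter> K" by blast
  then have compK: "compact K" using compact_Int_closed[OF cP cK] by simp
  have bl: "bounded_linear g" if "g \<in> K" for g
  proof (rule bounded_linear_intro[where K="norm v0 + r"])
    show "g (x + y) = g x + g y" for x y using that by (simp add: K_def)
    show "g (c *\<^sub>R x) = c *\<^sub>R g x" for c x using that by (simp add: K_def)
    show "norm (g x) \<le> norm x * (norm v0 + r)" for x
    proof -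
      have "\<bar>g x - v0 x\<bar> \<le> r * norm x" using that by (simp add: K_def)
      moreover have "\<bar>v0 x\<bar> \<le> norm v0 * norm x" using norm_blinfun[of v0 x] by simp
      ultimately show ?thesis by (simp add: algebra_simps)
    qed
  qed
  have eqS: "Blinfun ` K = cball v0 r"
  proof
    show "Blinfun ` K \<subseteq> cball v0 r"
    proof
      fix \<phi> assume "\<phi> \<in> Blinfun ` K"
      then obtain g where g: "g \<in> K" "\<phi> = Blinfun g" by blast
      have "norm (\<phi> - v0) \<le> r"
      proof (rule norm_blinfun_bound[OF r])
        fix x
        have "blinfun_apply (\<phi> - v0) x = g x - v0 x"
          using g bl[OF g(1)] bounded_linear_Blinfun_apply[OF bl[OF g(1)]] by (simp add: blinfun.diff_left)
        then show "norm (blinfun_apply (\<phi> - v0) x) \<le> r * norm x" using g by (simp add: K_def)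
      qed
      then show "\<phi> \<in> cball v0 r" by (simp add: dist_norm norm_minus_commute)
    qed
  next
    show "cball v0 r \<subseteq> Blinfun ` K"
    proof
      fix \<phi> assume "\<phi> \<in> cball v0 r"
      then have nr: "norm (\<phi> - v0) \<le> r" by (simp add: dist_norm norm_minus_commute)
      have "blinfun_apply \<phi> \<in> K" unfolding K_def
      proof (intro CollectI conjI allI)
        show "blinfun_apply \<phi> (x + y) = blinfun_apply \<phi> x + blinfun_apply \<phi> y" for x y by (simp add: blinfun.add_right)
        show "blinfun_apply \<phi> (c *\<^sub>R x) = c * blinfun_apply \<phi> x" for c x by (simp add: blinfun.scaleR_right)
        show "\<bar>blinfun_apply \<phi> w - blinfun_apply v0 w\<bar> \<le> r * norm w" for w
        proof -
          have "\<bar>blinfun_apply (\<phi> - v0) w\<bar> \<le> norm (\<phi> - v0) * norm w" using norm_blinfun[of "\<phi> - v0" w] by simp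
          also have "\<dots> \<le> r * norm w" using nr by (simp add: mult_right_mono)
          finally show ?thesis by (simp add: blinfun.diff_left)
        qed
      qed
      then show "\<phi> \<in> Blinfun ` K" by (metis blinfun_apply_inverse image_eqI)
    qed
  qed
  have cm: "continuous_map (subtopology euclidean K) strong_operator_topology Blinfun"
    unfolding continuous_on_strong_operator_topo_iff_coordinatewise
  proof
    fix x
    have "continuous_map (subtopology euclidean K) euclidean (\<lambda>g. g x)"
      unfolding continuous_map_iff_continuous by (rule continuous_on_subset[OF continuous_on_product_coordinates]) simp
    then show "continuous_map (subtopology euclidean K) euclidean (\<lambda>y. blinfun_apply (Blinfun y) x)"
      by (rule continuous_map_eq) (simp add: bl bounded_linear_Blinfun_apply)
  qed
  have "compactin (subtopology euclidean K) K" using compK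
    by (simp add: compactin_subtopology compactin_euclidean_iff)
  from image_compactin[OF this cm] eqS show ?thesis by (simp add: weak_star_eq)
qed

definition psum :: "(real \<Rightarrow> 'v::real_normed_vector) \<Rightarrow> nat \<Rightarrow> (nat \<Rightarrow> real) \<Rightarrow> real" where
  "psum c n t = (\<Sum>i<n. norm (c (t (Suc i)) - c (t i)))"

definition ispart :: "real \<Rightarrow> real \<Rightarrow> nat \<Rightarrow> (nat \<Rightarrow> real) \<Rightarrow> bool" where
  "ispart a b n t \<longleftrightarrow> t 0 = a \<and> t n = b \<and> (\<forall>i<n. t i \<le> t (Suc i))"

lemma curve_length_alt: "curve_length a b c = (SUP (n, t) \<in> {(n, t). ispart a b n t}. ereal (psum c n t))"
  unfolding curve_length_def ispart_def psum_def by simp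

lemma part_le_curve_length: "ispart a b n t \<Longrightarrow> ereal (psum c n t) \<le> curve_length a b c"
  unfolding curve_length_alt by (rule SUP_upper2[where i="(n,t)"]) auto

lemma ispart_mono: fixes t :: "nat \<Rightarrow> real" assumes "\<forall>i<n. t i \<le> t (Suc i)" "i \<le> j" "j \<le> n" shows "t i \<le> t j"
  using assms(2,3)
proof (induction j)
  case 0 then show ?case by simp
next
  case (Suc j)
  show ?case
  proof (cases "i = Suc j")
    case True then show ?thesis by simp
  next
    case False
    then have "t i \<le> t j" using Suc by simp
    also have "t j \<le> t (Suc j)" using assms(1) Suc by simp
    finally show ?thesis .
  qed
qed

lemma ispart_range: assumes "ispart a b n t" "i \<le> n" shows "a \<le> t i \<and> t i \<le> b"
  using assms ispart_mono[of n t 0 i] ispart_mono[of n t i n] unfolding ispart_def by auto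

lemma chord_le_curve_length:
  assumes "a \<le> b" shows "ereal (norm (c b - c a)) \<le> curve_length a b c"
proof -
  have "ispart a b 1 (\<lambda>i. if i = 0 then a else b)" using assms by (simp add: ispart_def)
  from part_le_curve_length[OF this, of c] show ?thesis by (simp add: psum_def)
qed

lemma curve_length_nonneg: "a \<le> b \<Longrightarrow> 0 \<le> curve_length a b c"
  using chord_le_curve_length[of a b c] by (meson ereal_less_eq(5) norm_ge_zero order_trans)

lemma curve_length_cong:
  assumes "\<And>s. a \<le> s \<Longrightarrow> s \<le> b \<Longrightarrow> c s = d s"
  shows "curve_length a b c = curve_length a b d"
  unfolding curve_length_alt
proof (rule SUP_cong[OF refl])
  fix x assume "x \<in> {(n, t). ispart a b n t}"
  then obtain n t where x: "x = (n,t)" "ispart a b n t" by blast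
  have "psum c n t = psum d n t" unfolding psum_def
    using ispart_range[OF x(2)] assms by (intro sum.cong) (auto simp: Suc_leI)
  then show "(case x of (n, t) \<Rightarrow> ereal (psum c n t)) = (case x of (n, t) \<Rightarrow> ereal (psum d n t))"
    using x by simp
qed

lemma part_split:
  assumes "ispart a b n t" "a \<le> m" "m \<le> b"
  shows "\<exists>n1 t1 n2 t2. ispart a m n1 t1 \<and> ispart m b n2 t2 \<and> psum c n t \<le> psum c n1 t1 + psum c n2 t2"
  using assms
proof (induction n arbitrary: b)
  case 0
  then have "a = b" "m = a" by (auto simp: ispart_def)
  then show ?case
    by (rule_tac x=0 in exI, rule_tac x="\<lambda>_. m" in exI, rule_tac x=0 in exI, rule_tac x="\<lambda>_. m" in exI)
       (simp add: ispart_def psum_def)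
next
  case (Suc n)
  let ?b0 = "t n"
  have pn: "ispart a ?b0 n t" using Suc.prems(1) by (simp add: ispart_def)
  have b0b: "?b0 \<le> b" using Suc.prems(1) by (auto simp: ispart_def)
  have ps: "psum c (Suc n) t = psum c n t + norm (c b - c ?b0)"
    using Suc.prems(1) by (simp add: psum_def ispart_def)
  show ?case
  proof (cases "m \<le> ?b0")
    case True
    from Suc.IH[OF pn Suc.prems(2) True] obtain n1 t1 n2 t2 where
      h: "ispart a m n1 t1" "ispart m ?b0 n2 t2" "psum c n t \<le> psum c n1 t1 + psum c n2 t2" by blast
    define t2' where "t2' = t2(Suc n2 := b)"
    have "ispart m b (Suc n2) t2'" using h(2) b0b unfolding ispart_def t2'_def by auto
    moreover have "psum c (Suc n2) t2' = psum c n2 t2 + norm (c b - c ?b0)"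
    proof -
      have "psum c n2 t2' = psum c n2 t2" unfolding psum_def t2'_def by (intro sum.cong) auto
      then show ?thesis using h(2) by (simp add: psum_def t2'_def ispart_def)
    qed
    ultimately show ?thesis using h(1,3) ps
      by (rule_tac x=n1 in exI, rule_tac x=t1 in exI, rule_tac x="Suc n2" in exI, rule_tac x=t2' in exI) simp
  next
    case False
    define t1' where "t1' = t(Suc n := m)"
    define t2' where "t2' = (\<lambda>i::nat. if i = 0 then m else b)"
    have "ispart a m (Suc n) t1'" using pn False unfolding ispart_def t1'_def by auto
    moreover have "ispart m b 1 t2'" using Suc.prems(3) by (simp add: ispart_def t2'_def)
    moreover have "psum c (Suc n) t1' = psum c n t + norm (c m - c ?b0)"
    proof -
      have "psum c n t1' = psum c n t" unfolding psum_def t1'_def by (intro sum.cong) auto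
      then show ?thesis by (simp add: psum_def t1'_def)
    qed
    moreover have "psum c 1 t2' = norm (c b - c m)" by (simp add: psum_def t2'_def)
    moreover have "norm (c b - c ?b0) \<le> norm (c m - c ?b0) + norm (c b - c m)"
      using norm_triangle_ineq[of "c m - c ?b0" "c b - c m"] by simp
    ultimately show ?thesis using ps
      by (rule_tac x="Suc n" in exI, rule_tac x=t1' in exI, rule_tac x="1" in exI, rule_tac x=t2' in exI) auto
  qed
qed

lemma curve_length_split:
  assumes "a \<le> m" "m \<le> b"
  shows "curve_length a b c \<le> curve_length a m c + curve_length m b c"
  unfolding curve_length_alt[of a b]
proof (rule SUP_least)
  fix x assume "x \<in> {(n, t). ispart a b n t}"
  then obtain n t where x: "x = (n,t)" "ispart a b n t" by blast
  from part_split[OF x(2) assms, of c] obtain n1 t1 n2 t2 where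
    h: "ispart a m n1 t1" "ispart m b n2 t2" "psum c n t \<le> psum c n1 t1 + psum c n2 t2" by blast
  have "ereal (psum c n t) \<le> ereal (psum c n1 t1) + ereal (psum c n2 t2)" using h(3) by simp
  also have "\<dots> \<le> curve_length a m c + curve_length m b c"
    by (intro add_mono part_le_curve_length h(1,2))
  finally show "(case x of (n, t) \<Rightarrow> ereal (psum c n t)) \<le> curve_length a m c + curve_length m b c"
    using x by simp
qed

lemma curve_length_affine:
  assumes "\<And>s. a \<le> s \<Longrightarrow> s \<le> b \<Longrightarrow> c s = u + s *\<^sub>R w" "a \<le> b"
  shows "curve_length a b c \<le> ereal ((b - a) * norm w)"
  unfolding curve_length_alt
proof (rule SUP_least)
  fix x assume "x \<in> {(n, t). ispart a b n t}"
  then obtain n t where x: "x = (n,t)" "ispart a b n t" by blast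
  have "psum c n t = (\<Sum>i<n. (t (Suc i) - t i) * norm w)" unfolding psum_def
  proof (intro sum.cong refl)
    fix i assume i: "i \<in> {..<n}"
    have r: "a \<le> t i" "t i \<le> b" "a \<le> t (Suc i)" "t (Suc i) \<le> b" using ispart_range[OF x(2)] i by auto
    have m: "t i \<le> t (Suc i)" using x(2) i by (simp add: ispart_def)
    have "c (t (Suc i)) - c (t i) = (t (Suc i) - t i) *\<^sub>R w" using assms(1) r by (simp add: algebra_simps)
    then show "norm (c (t (Suc i)) - c (t i)) = (t (Suc i) - t i) * norm w" using m by simp
  qed
  also have "\<dots> = (\<Sum>i<n. t (Suc i) - t i) * norm w" by (simp add: sum_distrib_right)
  also have "\<dots> = (b - a) * norm w" using x(2) by (simp add: sum_lessThan_telescope ispart_def)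
  finally show "(case x of (n, t) \<Rightarrow> ereal (psum c n t)) \<le> ereal ((b - a) * norm w)" using x by simp
qed

lemma topspace_Xf: "topspace (Xf_topology X f) = Xf X f"
  by (simp add: Xf_topology_def topspace_quot Xf_def)

lemma Xf_dist_le_curve:
  assumes "a \<le> b" "continuous_map (subtopology euclideanreal {a..b}) (Xf_topology X f) \<gamma>" "\<gamma> a = p" "\<gamma> b = q"
  shows "Xf_dist X f p q \<le> curve_length a b (ftilde f \<circ> \<gamma>)"
  unfolding Xf_dist_def by (rule INF_lower2[where i="(a,b,\<gamma>)"]) (use assms in auto)

lemma Xf_dist_ge_norm:
  "ereal (norm (ftilde f p - ftilde f q)) \<le> Xf_dist X f p q"
  unfolding Xf_dist_def
proof (rule INF_greatest)
  fix x assume "x \<in> {(a, b, \<gamma>). a \<le> b \<and> continuous_map (subtopology euclideanreal {a..b}) (Xf_topology X f) \<gamma> \<and> \<gamma> a = p \<and> \<gamma> b = q}"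
  then obtain a b \<gamma> where x: "x = (a,b,\<gamma>)" "a \<le> b" "\<gamma> a = p" "\<gamma> b = q" by blast
  have "ereal (norm ((ftilde f \<circ> \<gamma>) b - (ftilde f \<circ> \<gamma>) a)) \<le> curve_length a b (ftilde f \<circ> \<gamma>)"
    by (rule chord_le_curve_length[OF x(2)])
  then show "ereal (norm (ftilde f p - ftilde f q)) \<le> (case x of (a, b, \<gamma>) \<Rightarrow> curve_length a b (ftilde f \<circ> \<gamma>))"
    using x by (simp add: norm_minus_commute)
qed

lemma Xf_dist_less:
  assumes "Xf_dist X f p q < z"
  obtains a b \<gamma> where "a \<le> b" "continuous_map (subtopology euclideanreal {a..b}) (Xf_topology X f) \<gamma>"
    "\<gamma> a = p" "\<gamma> b = q" "curve_length a b (ftilde f \<circ> \<gamma>) < z"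
  using assms unfolding Xf_dist_def INF_less_iff by auto

lemma concat_curve:
  assumes ab: "a \<le> b"
    and c1: "continuous_map (subtopology euclideanreal {a..b}) T \<gamma>1"
    and c2: "continuous_map (subtopology euclideanreal {0..1}) T \<gamma>2"
    and m: "\<gamma>1 b = \<gamma>2 0"
  shows "continuous_map (subtopology euclideanreal {a..b+1}) T (\<lambda>t. if t \<le> b then \<gamma>1 t else \<gamma>2 (t - b))"
proof (rule continuous_map_cases_le)
  show "continuous_map (subtopology euclideanreal {a..b + 1}) euclideanreal (\<lambda>x. x)"
    by (simp add: continuous_map_from_subtopology)
  show "continuous_map (subtopology euclideanreal {a..b + 1}) euclideanreal (\<lambda>x. b)" by simp
  have e1: "subtopology (subtopology euclideanreal {a..b + 1}) {x \<in> topspace (subtopology euclideanreal {a..b + 1}). x \<le> b}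
      = subtopology euclideanreal {a..b}"
    using ab by (simp add: subtopology_subtopology) (intro arg_cong[where f="subtopology euclideanreal"]; auto)
  show "continuous_map (subtopology (subtopology euclideanreal {a..b + 1}) {x \<in> topspace (subtopology euclideanreal {a..b + 1}). x \<le> b}) T \<gamma>1"
    using c1 e1 by simp
  have e2: "subtopology (subtopology euclideanreal {a..b + 1}) {x \<in> topspace (subtopology euclideanreal {a..b + 1}). b \<le> x}
      = subtopology euclideanreal {b..b+1}"
    using ab by (simp add: subtopology_subtopology) (intro arg_cong[where f="subtopology euclideanreal"]; auto)
  have sh: "continuous_map (subtopology euclideanreal {b..b+1}) (subtopology euclideanreal {0..1}) (\<lambda>t. t - b)"
    by (auto intro!: continuous_map_into_subtopology continuous_map_from_subtopology continuous_intros)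
  show "continuous_map (subtopology (subtopology euclideanreal {a..b + 1}) {x \<in> topspace (subtopology euclideanreal {a..b + 1}). b \<le> x}) T (\<lambda>t. \<gamma>2 (t - b))"
    unfolding e2 using continuous_map_compose[OF sh c2] by (simp add: o_def)
  show "\<And>x. x \<in> topspace (subtopology euclideanreal {a..b + 1}) \<Longrightarrow> x = b \<Longrightarrow> \<gamma>1 x = \<gamma>2 (x - b)"
    using m by simp
qed

lemma LFC_fclass:
  assumes "LFC X f G" "a \<in> G" "b \<in> G" "f a = f b"
  shows "fclass X f a = fclass X f b"
proof -
  have "connected_component_of (subtopology X (fiber X f (f a))) a b"
    using assms(1)[unfolded LFC_def, rule_format, OF assms(2) assms(2) assms(3)] assms(4) by simp
  from fclass_eqI[OF this] show ?thesis by simp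
qed

lemma LFC_subset: "LFC X f U \<Longrightarrow> G \<subseteq> U \<Longrightarrow> LFC X f G"
  unfolding LFC_def by blast

lemma local_segment:
  fixes f :: "'a \<Rightarrow> 'v::real_normed_vector"
  assumes cf: "continuous_map X euclidean f" and lcd: "has_local_convexity_data X f"
    and lfc: "locally_fiber_connected X f" and y: "y \<in> topspace X"
  obtains N where "openin X N" "y \<in> N"
    "\<And>y'. y' \<in> N \<Longrightarrow> \<exists>\<gamma>. continuous_map (subtopology euclideanreal {0..1}) (Xf_topology X f) \<gamma> \<and>
        \<gamma> 0 = fclass X f y' \<and> \<gamma> 1 = fclass X f y \<and> (\<forall>s\<in>{0..1}. ftilde f (\<gamma> s) = f y' + s *\<^sub>R (f y - f y'))"
proof -
  have "\<exists>N. openin X N \<and> y \<in> N \<and> (\<forall>U. openin X U \<and> y \<in> U \<and> U \<subseteq> N \<longrightarrow>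
           (\<exists>C. is_convex_cone_with_vertex C (f y) \<and>
                f ` U \<subseteq> C \<and> nbhd_in (subtopology euclidean C) (f y) (f ` U) \<and>
                open_map (subtopology X U) (subtopology euclidean C) f \<and>
                (\<forall>U'. U' \<subseteq> U \<and> nbhd_in X y U' \<longrightarrow> nbhd_in (subtopology euclidean C) (f y) (f ` U'))))"
    using lcd y unfolding has_local_convexity_data_def by (rule bspec)
  then obtain N0 where N0: "openin X N0" "y \<in> N0" and N0U: "\<forall>U. openin X U \<and> y \<in> U \<and> U \<subseteq> N0 \<longrightarrow>
           (\<exists>C. is_convex_cone_with_vertex C (f y) \<and>
                f ` U \<subseteq> C \<and> nbhd_in (subtopology euclidean C) (f y) (f ` U) \<and>
                open_map (subtopology X U) (subtopology euclidean C) f \<and>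
                (\<forall>U'. U' \<subseteq> U \<and> nbhd_in X y U' \<longrightarrow> nbhd_in (subtopology euclidean C) (f y) (f ` U')))"
    by blast
  obtain U' where U': "U' \<subseteq> N0" "nbhd_in X y U'" "LFC X f U'"
    using lfc y N0 unfolding locally_fiber_connected_def by blast
  obtain G where G: "openin X G" "y \<in> G" "G \<subseteq> U'" using U'(2) unfolding nbhd_in_def by blast
  have lG: "LFC X f G" using LFC_subset[OF U'(3) G(3)] .
  obtain C where C: "is_convex_cone_with_vertex C (f y)" "f ` G \<subseteq> C"
     "nbhd_in (subtopology euclidean C) (f y) (f ` G)" "open_map (subtopology X G) (subtopology euclidean C) f"
  proof -
    have "G \<subseteq> N0" using G(3) U'(1) by blast
    then have "\<exists>C. is_convex_cone_with_vertex C (f y) \<and>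
                f ` G \<subseteq> C \<and> nbhd_in (subtopology euclidean C) (f y) (f ` G) \<and>
                open_map (subtopology X G) (subtopology euclidean C) f"
      using N0U G(1,2) by blast
    then show ?thesis using that by blast
  qed
  have convC: "convex C" using C(1) by (simp add: is_convex_cone_with_vertex_def)
  have fyC: "f y \<in> C" using C(1) by (simp add: is_convex_cone_with_vertex_def is_cone_with_vertex_def)
  obtain Ob where Ob: "openin (subtopology euclidean C) Ob" "f y \<in> Ob" "Ob \<subseteq> f ` G"
    using C(3) unfolding nbhd_in_def by blast
  obtain T where T: "open T" "Ob = T \<inter> C" using Ob(1) by (auto simp: openin_subtopology)
  obtain e where e: "e > 0" "ball (f y) e \<subseteq> T" using T Ob(2) by (meson IntD1 open_contains_ball)
  define N where "N = {x \<in> topspace X. f x \<in> ball (f y) e} \<inter> G"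
  have "openin X {x \<in> topspace X. f x \<in> ball (f y) e}"
    using openin_continuous_map_preimage[OF cf, of "ball (f y) e"] by (simp del: mem_ball)
  then have oN: "openin X N" unfolding N_def using G(1) by blast
  have yN: "y \<in> N" unfolding N_def using y G e by auto
  have GX: "G \<subseteq> topspace X" using G(1) openin_subset by blast
  show ?thesis
  proof (rule that[OF oN yN])
    fix y' assume y': "y' \<in> N"
    define s where "s = (\<lambda>t::real. f y' + t *\<^sub>R (f y - f y'))"
    have sC: "s t \<in> C" if "t \<in> {0..1}" for t
    proof -
      have "f y' \<in> C" using y' C(2) N_def by auto
      then have "(1 - t) *\<^sub>R f y' + t *\<^sub>R f y \<in> C" using convC fyC that by (simp add: convex_def)
      then show ?thesis by (simp add: s_def algebra_simps)
    qed
    have sB: "s t \<in> ball (f y) e" if "t \<in> {0..1}" for t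
    proof -
      have "f y' \<in> ball (f y) e" using y' N_def by auto
      then have "(1 - t) *\<^sub>R f y' + t *\<^sub>R f y \<in> ball (f y) e"
        using convex_ball[of "f y" e] e(1) that by (simp add: convex_def)
      then show ?thesis by (simp add: s_def algebra_simps)
    qed
    have sG: "s t \<in> f ` G" if "t \<in> {0..1}" for t using sC[OF that] sB[OF that] e(2) T(2) Ob(3) by blast
    define g where "g = (\<lambda>t. SOME x. x \<in> G \<and> f x = s t)"
    have g: "g t \<in> G \<and> f (g t) = s t" if "t \<in> {0..1}" for t
    proof -
      have "\<exists>x. x \<in> G \<and> f x = s t" using sG[OF that] by auto
      from someI_ex[OF this] show ?thesis unfolding g_def .
    qed
    define \<gamma> where "\<gamma> = (\<lambda>t. fclass X f (g t))"
    have g0: "\<gamma> 0 = fclass X f y'"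
    proof -
      have "g 0 \<in> G" "f (g 0) = f y'" using g[of 0] by (auto simp: s_def)
      moreover have "y' \<in> G" using y' N_def by auto
      ultimately show ?thesis unfolding \<gamma>_def using LFC_fclass[OF lG] by metis
    qed
    have g1: "\<gamma> 1 = fclass X f y"
    proof -
      have "g 1 \<in> G" "f (g 1) = f y" using g[of 1] by (auto simp: s_def)
      then show ?thesis unfolding \<gamma>_def using LFC_fclass[OF lG _ G(2)] by metis
    qed
    have ft: "ftilde f (\<gamma> s') = f y' + s' *\<^sub>R (f y - f y')" if "s' \<in> {0..1}" for s'
      using g[OF that] GX ftilde_fclass[of "g s'" X f] by (auto simp: \<gamma>_def s_def)
    have cont: "continuous_map (subtopology euclideanreal {0..1}) (Xf_topology X f) \<gamma>"
      unfolding continuous_map_def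
    proof (intro conjI allI impI)
      show "\<gamma> \<in> topspace (subtopology euclideanreal {0..1}) \<rightarrow> topspace (Xf_topology X f)"
        using g GX unfolding topspace_Xf Xf_def \<gamma>_def Pi_def by (force intro!: imageI)
      fix W assume W: "openin (Xf_topology X f) W"
      define P where "P = {x \<in> topspace X. fclass X f x \<in> W}"
      have oP: "openin X P" using W unfolding P_def Xf_topology_def openin_quot by blast
      have "openin (subtopology X G) (P \<inter> G)"
        unfolding openin_subtopology using oP by blast
      then have oimg: "openin (subtopology euclidean C) (f ` (P \<inter> G))" using C(4)[unfolded open_map_def] by blast
      have cs: "continuous_map (subtopology euclideanreal {0..1}) (subtopology euclidean C) s"
      proof (rule continuous_map_into_subtopology)
        have "continuous_on UNIV s" unfolding s_def by (intro continuous_intros)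
        then have "continuous_map euclidean euclidean s" by (simp add: continuous_map_iff_continuous2)
        then show "continuous_map (subtopology euclideanreal {0..1}) euclidean s"
          by (rule continuous_map_from_subtopology)
        show "s \<in> topspace (subtopology euclideanreal {0..1}) \<rightarrow> C" using sC by auto
      qed
      have "openin (subtopology euclideanreal {0..1}) {t \<in> topspace (subtopology euclideanreal {0..1}). s t \<in> f ` (P \<inter> G)}"
        using openin_continuous_map_preimage[OF cs oimg] .
      moreover have "{t \<in> topspace (subtopology euclideanreal {0..1}). s t \<in> f ` (P \<inter> G)}
          = {t \<in> topspace (subtopology euclideanreal {0..1}). \<gamma> t \<in> W}"
      proof (rule Collect_cong, rule iffI)
        fix t assume "t \<in> topspace (subtopology euclideanreal {0..1}) \<and> s t \<in> f ` (P \<inter> G)"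
        then obtain x where x: "t \<in> {0..1}" "x \<in> P" "x \<in> G" "s t = f x" by auto
        have "fclass X f x = fclass X f (g t)" using LFC_fclass[OF lG x(3)] g[OF x(1)] x(4) by metis
        then show "t \<in> topspace (subtopology euclideanreal {0..1}) \<and> \<gamma> t \<in> W"
          using x P_def by (auto simp: \<gamma>_def)
      next
        fix t assume "t \<in> topspace (subtopology euclideanreal {0..1}) \<and> \<gamma> t \<in> W"
        then have t: "t \<in> {0..1}" "\<gamma> t \<in> W" by auto
        then have "g t \<in> P \<inter> G" using g[OF t(1)] GX by (auto simp: P_def \<gamma>_def)
        then show "t \<in> topspace (subtopology euclideanreal {0..1}) \<and> s t \<in> f ` (P \<inter> G)"
          using t g[OF t(1)] by (metis imageI topspace_euclidean_subtopology)
      qed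
      ultimately show "openin (subtopology euclideanreal {0..1}) {t \<in> topspace (subtopology euclideanreal {0..1}). \<gamma> t \<in> W}"
        by simp
    qed
    show "\<exists>\<gamma>. continuous_map (subtopology euclideanreal {0..1}) (Xf_topology X f) \<gamma> \<and>
        \<gamma> 0 = fclass X f y' \<and> \<gamma> 1 = fclass X f y \<and> (\<forall>s\<in>{0..1}. ftilde f (\<gamma> s) = f y' + s *\<^sub>R (f y - f y'))"
      using cont g0 g1 ft by blast
  qed
qed

lemma ball_preimage_open:
  fixes f :: "'a \<Rightarrow> 'v::real_normed_vector"
  assumes cf: "continuous_map X euclidean f" and lcd: "has_local_convexity_data X f"
    and lfc: "locally_fiber_connected X f" and y: "y \<in> topspace X"
    and D: "ereal r < Xf_dist X f p (fclass X f y)"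
  shows "\<exists>N. openin X N \<and> y \<in> N \<and> (\<forall>y'\<in>N. ereal r < Xf_dist X f p (fclass X f y'))"
proof -
  obtain z where z: "ereal r < ereal z" "ereal z < Xf_dist X f p (fclass X f y)" using ereal_dense2[OF D] by blast
  define \<epsilon> where "\<epsilon> = (z - r) / 2"
  have \<epsilon>: "\<epsilon> > 0" using z(1) by (simp add: \<epsilon>_def)
  obtain N where N: "openin X N" "y \<in> N"
    "\<And>y'. y' \<in> N \<Longrightarrow> \<exists>\<gamma>. continuous_map (subtopology euclideanreal {0..1}) (Xf_topology X f) \<gamma> \<and>
        \<gamma> 0 = fclass X f y' \<and> \<gamma> 1 = fclass X f y \<and> (\<forall>s\<in>{0..1}. ftilde f (\<gamma> s) = f y' + s *\<^sub>R (f y - f y'))"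
    using local_segment[OF cf lcd lfc y] by metis
  define N' where "N' = N \<inter> {x \<in> topspace X. f x \<in> ball (f y) \<epsilon>}"
  have "openin X {x \<in> topspace X. f x \<in> ball (f y) \<epsilon>}"
    using openin_continuous_map_preimage[OF cf, of "ball (f y) \<epsilon>"] by (simp del: mem_ball)
  then have oN': "openin X N'" using N(1) by (simp add: N'_def openin_Int)
  have yN': "y \<in> N'" using N(2) y \<epsilon> by (simp add: N'_def)
  have "ereal r < Xf_dist X f p (fclass X f y')" if y': "y' \<in> N'" for y'
  proof (rule ccontr)
    assume "\<not> ereal r < Xf_dist X f p (fclass X f y')"
    then have "Xf_dist X f p (fclass X f y') < ereal (r + \<epsilon>)" using \<epsilon>
      by (meson ereal_less_eq(3) less_add_same_cancel1 not_le order_le_less_trans)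
    then obtain a b \<gamma>1 where g1: "a \<le> b" "continuous_map (subtopology euclideanreal {a..b}) (Xf_topology X f) \<gamma>1"
      "\<gamma>1 a = p" "\<gamma>1 b = fclass X f y'" "curve_length a b (ftilde f \<circ> \<gamma>1) < ereal (r + \<epsilon>)"
      by (rule Xf_dist_less)
    obtain \<gamma>2 where g2: "continuous_map (subtopology euclideanreal {0..1}) (Xf_topology X f) \<gamma>2"
        "\<gamma>2 0 = fclass X f y'" "\<gamma>2 1 = fclass X f y" "\<forall>s\<in>{0..1}. ftilde f (\<gamma>2 s) = f y' + s *\<^sub>R (f y - f y')"
      using N(3) y' N'_def by blast
    define \<gamma> where "\<gamma> = (\<lambda>t. if t \<le> b then \<gamma>1 t else \<gamma>2 (t - b))"
    have cg: "continuous_map (subtopology euclideanreal {a..b+1}) (Xf_topology X f) \<gamma>"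
      unfolding \<gamma>_def by (rule concat_curve[OF g1(1,2) g2(1)]) (simp add: g1(4) g2(2))
    have "Xf_dist X f p (fclass X f y) \<le> curve_length a (b+1) (ftilde f \<circ> \<gamma>)"
      by (rule Xf_dist_le_curve) (use g1 g2 cg in \<open>auto simp: \<gamma>_def\<close>)
    also have "\<dots> \<le> curve_length a b (ftilde f \<circ> \<gamma>) + curve_length b (b+1) (ftilde f \<circ> \<gamma>)"
      by (rule curve_length_split) (use g1 in auto)
    also have "curve_length a b (ftilde f \<circ> \<gamma>) = curve_length a b (ftilde f \<circ> \<gamma>1)"
      by (rule curve_length_cong) (simp add: \<gamma>_def)
    also have "curve_length b (b+1) (ftilde f \<circ> \<gamma>) \<le> ereal ((b + 1 - b) * norm (f y - f y'))"
    proof (rule curve_length_affine)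
      fix s assume s: "b \<le> s" "s \<le> b + 1"
      show "(ftilde f \<circ> \<gamma>) s = (f y' - b *\<^sub>R (f y - f y')) + s *\<^sub>R (f y - f y')"
      proof (cases "s \<le> b")
        case True
        then have "s = b" using s by simp
        then have "(ftilde f \<circ> \<gamma>) s = ftilde f (\<gamma>2 0)" using g1(4) g2(2) by (simp add: \<gamma>_def)
        also have "\<dots> = f y'" using g2(4) by simp
        finally show ?thesis using \<open>s = b\<close> by simp
      next
        case False
        then have "(ftilde f \<circ> \<gamma>) s = f y' + (s - b) *\<^sub>R (f y - f y')" using g2(4) s by (simp add: \<gamma>_def)
        then show ?thesis by (simp add: algebra_simps)
      qed
    qed simp
    finally have le: "Xf_dist X f p (fclass X f y) \<le> curve_length a b (ftilde f \<circ> \<gamma>1) + ereal (norm (f y - f y'))"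
      by (simp add: add_left_mono o_def)
    have "0 \<le> curve_length a b (ftilde f \<circ> \<gamma>1)" using curve_length_nonneg g1(1) by blast
    then obtain l where l: "curve_length a b (ftilde f \<circ> \<gamma>1) = ereal l" "l < r + \<epsilon>"
      using g1(5) by (cases "curve_length a b (ftilde f \<circ> \<gamma>1)") auto
    have "norm (f y - f y') < \<epsilon>" using y' by (simp add: N'_def dist_norm)
    moreover have "2 * \<epsilon> = z - r" by (simp add: \<epsilon>_def)
    ultimately have "l + norm (f y - f y') < z" using l(2) by linarith
    then have lt: "ereal (l + norm (f y - f y')) < ereal z" by simp
    have "Xf_dist X f p (fclass X f y) \<le> ereal (l + norm (f y - f y'))" using le l(1) by simp
    then have "Xf_dist X f p (fclass X f y) < ereal z" using lt by (rule order_le_less_trans)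
    then show False using z(2) by simp
  qed
  then show ?thesis using oN' yN' by blast
qed

lemma ball_closed:
  fixes f :: "'a \<Rightarrow> 'v::real_normed_vector"
  assumes cf: "continuous_map X euclidean f" and lcd: "has_local_convexity_data X f"
    and lfc: "locally_fiber_connected X f"
  shows "closedin (Xf_topology X f) {q \<in> Xf X f. Xf_dist X f p q \<le> ereal r}"
  unfolding Xf_topology_def closedin_quot
proof
  show "{q \<in> Xf X f. Xf_dist X f p q \<le> ereal r} \<subseteq> fclass X f ` topspace X" by (auto simp: Xf_def)
  have e: "{x \<in> topspace X. fclass X f x \<in> {q \<in> Xf X f. Xf_dist X f p q \<le> ereal r}}
      = {x \<in> topspace X. Xf_dist X f p (fclass X f x) \<le> ereal r}" by (auto simp: Xf_def)
  have "openin X (topspace X - {x \<in> topspace X. Xf_dist X f p (fclass X f x) \<le> ereal r})"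
  proof (subst openin_subopen, intro ballI)
    fix y assume "y \<in> topspace X - {x \<in> topspace X. Xf_dist X f p (fclass X f x) \<le> ereal r}"
    then have y: "y \<in> topspace X" "ereal r < Xf_dist X f p (fclass X f y)" by auto
    from ball_preimage_open[OF cf lcd lfc y] obtain N where
      N: "openin X N" "y \<in> N" "\<forall>y'\<in>N. ereal r < Xf_dist X f p (fclass X f y')" by blast
    have "N \<subseteq> topspace X" using N(1) openin_subset by blast
    then show "\<exists>T. openin X T \<and> y \<in> T \<and> T \<subseteq> topspace X - {x \<in> topspace X. Xf_dist X f p (fclass X f x) \<le> ereal r}"
      using N by (intro exI[of _ N]) auto
  qed
  then show "closedin X {x \<in> topspace X. fclass X f x \<in> {q \<in> Xf X f. Xf_dist X f p q \<le> ereal r}}"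
    unfolding e closedin_def by auto
qed

lemma closed_of_locfin:
  assumes t1: "t1_space X" and Z: "Z \<subseteq> topspace X"
    and H: "\<And>x. x \<in> topspace X \<Longrightarrow> \<exists>W. openin X W \<and> x \<in> W \<and> finite (W \<inter> Z)"
  shows "closedin X Z"
  unfolding closedin_def
proof (intro conjI Z)
  show "openin X (topspace X - Z)"
  proof (subst openin_subopen, intro ballI)
    fix x assume x: "x \<in> topspace X - Z"
    obtain W where W: "openin X W" "x \<in> W" "finite (W \<inter> Z)" using H x by blast
    have "closedin X (W \<inter> Z)" using t1 W(3) Z t1_space_closedin_finite by blast
    then have "openin X (W - (W \<inter> Z))" using openin_diff[OF W(1)] by blast
    moreover have "W - (W \<inter> Z) \<subseteq> topspace X - Z" using W(1) openin_subset by blast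
    ultimately show "\<exists>T. openin X T \<and> x \<in> T \<and> T \<subseteq> topspace X - Z" using x W(2) by blast
  qed
qed

lemma subsingleton_finite: "(\<And>a b. a \<in> S \<Longrightarrow> b \<in> S \<Longrightarrow> a = b) \<Longrightarrow> finite S"
proof (cases "S = {}")
  case False
  assume h: "\<And>a b. a \<in> S \<Longrightarrow> b \<in> S \<Longrightarrow> a = b"
  obtain a where a: "a \<in> S" using False by blast
  have "S \<subseteq> {a}" using h a by blast
  then show ?thesis using finite_subset by blast
qed simp

lemma convex_open_singleton:
  fixes C :: "'v::real_normed_vector set"
  assumes "convex C" "c \<in> C" "openin (subtopology euclidean C) {c}"
  shows "C = {c}"
proof -
  obtain T where T: "open T" "{c} = T \<inter> C" using assms(3) by (auto simp: openin_subtopology)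
  have cT: "c \<in> T" using T(2) by blast
  obtain e where e: "e > 0" "ball c e \<subseteq> T" using T(1) cT open_contains_ball by blast
  have "d = c" if d: "d \<in> C" for d
  proof (rule ccontr)
    assume ne: "d \<noteq> c"
    define t where "t = min 1 (e / (2 * norm (d - c)))"
    have np: "norm (d - c) > 0" using ne by simp
    have t: "0 < t" "t \<le> 1" using e np by (auto simp: t_def)
    define p where "p = c + t *\<^sub>R (d - c)"
    have "p = (1 - t) *\<^sub>R c + t *\<^sub>R d" by (simp add: p_def algebra_simps)
    then have pC: "p \<in> C" using assms(1,2) d t by (simp add: convex_def)
    have "norm (p - c) = t * norm (d - c)" using t by (simp add: p_def)
    also have "\<dots> \<le> e / (2 * norm (d - c)) * norm (d - c)" using np by (intro mult_right_mono) (auto simp: t_def)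
    also have "\<dots> = e / 2" using np by simp
    finally have "p \<in> ball c e" using e by (simp add: dist_norm norm_minus_commute)
    then have "p \<in> T \<inter> C" using e pC by blast
    then have "p = c" using T by blast
    then show False using t np by (simp add: p_def)
  qed
  then show ?thesis using assms(2) by blast
qed

lemma const_or_nowhere_lc:
  fixes f :: "'a \<Rightarrow> 'v::real_normed_vector"
  assumes conn: "connected_space X" and cf: "continuous_map X euclidean f"
    and lcd: "has_local_convexity_data X f"
  shows "(\<forall>x\<in>topspace X. \<forall>y\<in>topspace X. f x = f y) \<or>
         (\<forall>x W. openin X W \<and> x \<in> W \<longrightarrow> (\<exists>z\<in>W. f z \<noteq> f x))"
proof -
  define LC where "LC = {x \<in> topspace X. \<exists>W. openin X W \<and> x \<in> W \<and> (\<forall>z\<in>W. f z = f x)}"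
  have oLC: "openin X LC"
  proof (subst openin_subopen, intro ballI)
    fix x assume "x \<in> LC"
    then obtain W where W: "openin X W" "x \<in> W" "\<forall>z\<in>W. f z = f x" by (auto simp: LC_def)
    have "W \<subseteq> LC"
    proof
      fix z assume "z \<in> W"
      then have zX: "z \<in> topspace X" using openin_subset[OF W(1)] by blast
      have "\<forall>z'\<in>W. f z' = f z" using W(3) \<open>z \<in> W\<close> by simp
      then show "z \<in> LC" unfolding LC_def using W(1) \<open>z \<in> W\<close> zX by blast
    qed
    then show "\<exists>T. openin X T \<and> x \<in> T \<and> T \<subseteq> LC" using W by blast
  qed
  have cLC: "openin X (topspace X - LC)"
  proof (subst openin_subopen, intro ballI)
    fix x assume x: "x \<in> topspace X - LC"
    have "\<exists>N. openin X N \<and> x \<in> N \<and> (\<forall>U. openin X U \<and> x \<in> U \<and> U \<subseteq> N \<longrightarrow>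
           (\<exists>C. is_convex_cone_with_vertex C (f x) \<and>
                f ` U \<subseteq> C \<and> nbhd_in (subtopology euclidean C) (f x) (f ` U) \<and>
                open_map (subtopology X U) (subtopology euclidean C) f \<and>
                (\<forall>U'. U' \<subseteq> U \<and> nbhd_in X x U' \<longrightarrow> nbhd_in (subtopology euclidean C) (f x) (f ` U'))))"
      using lcd x[THEN DiffD1] unfolding has_local_convexity_data_def by (rule bspec)
    then obtain N where N: "openin X N" "x \<in> N" and NU: "\<forall>U. openin X U \<and> x \<in> U \<and> U \<subseteq> N \<longrightarrow>
           (\<exists>C. is_convex_cone_with_vertex C (f x) \<and>
                f ` U \<subseteq> C \<and> nbhd_in (subtopology euclidean C) (f x) (f ` U) \<and>
                open_map (subtopology X U) (subtopology euclidean C) f \<and>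
                (\<forall>U'. U' \<subseteq> U \<and> nbhd_in X x U' \<longrightarrow> nbhd_in (subtopology euclidean C) (f x) (f ` U')))"
      by blast
    have "\<exists>C. is_convex_cone_with_vertex C (f x) \<and> f ` N \<subseteq> C \<and>
                open_map (subtopology X N) (subtopology euclidean C) f"
      using NU[rule_format, OF conjI[OF N(1) conjI[OF N(2) subset_refl]]] by blast
    then obtain C where C: "is_convex_cone_with_vertex C (f x)" "f ` N \<subseteq> C"
      "open_map (subtopology X N) (subtopology euclidean C) f" by blast
    have NX: "N \<subseteq> topspace X" using N(1) openin_subset by blast
    have "N \<inter> LC = {}"
    proof (rule ccontr)
      assume "N \<inter> LC \<noteq> {}"
      then obtain z W where z: "z \<in> N" "openin X W" "z \<in> W" "\<forall>w\<in>W. f w = f z" by (auto simp: LC_def)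
      have "openin (subtopology X N) (W \<inter> N)" unfolding openin_subtopology using z(2) by blast
      then have "openin (subtopology euclidean C) (f ` (W \<inter> N))" using C(3)[unfolded open_map_def] by blast
      moreover have "f ` (W \<inter> N) = {f z}"
      proof
        show "f ` (W \<inter> N) \<subseteq> {f z}" using z(4) by (simp add: image_subset_iff)
        show "{f z} \<subseteq> f ` (W \<inter> N)" using z(1,3) by blast
      qed
      ultimately have "openin (subtopology euclidean C) {f z}" by simp
      moreover have "convex C" using C(1) by (simp add: is_convex_cone_with_vertex_def)
      moreover have "f z \<in> C" using C(2) z(1) by blast
      ultimately have "C = {f z}" using convex_open_singleton by blast
      then have fN: "\<forall>w\<in>N. f w = f z" using C(2) by (simp add: image_subset_iff)
      then have "\<forall>w\<in>N. f w = f x" using N(2) by simp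
      then have "x \<in> LC" unfolding LC_def using N NX by blast
      then show False using x by blast
    qed
    then show "\<exists>T. openin X T \<and> x \<in> T \<and> T \<subseteq> topspace X - LC" using N NX by blast
  qed
  have "LC \<subseteq> topspace X" unfolding LC_def by blast
  then have "closedin X LC" unfolding closedin_def using cLC by blast
  then have "LC = {} \<or> LC = topspace X"
    using connected_space_clopen_in[THEN iffD1, OF conn, rule_format, OF conjI[OF oLC]] by blast
  then show ?thesis
  proof
    assume "LC = {}"
    then have "\<forall>x W. openin X W \<and> x \<in> W \<longrightarrow> (\<exists>z\<in>W. f z \<noteq> f x)"
    proof (intro allI impI)
      fix x W assume W: "openin X W \<and> x \<in> W"
      show "\<exists>z\<in>W. f z \<noteq> f x"
      proof (rule ccontr)
        assume "\<not> (\<exists>z\<in>W. f z \<noteq> f x)"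
        then have "x \<in> LC" unfolding LC_def using W openin_subset[of X W] by blast
        then show False using \<open>LC = {}\<close> by blast
      qed
    qed
    then show ?thesis by blast
  next
    assume all: "LC = topspace X"
    have "\<forall>x\<in>topspace X. \<forall>y\<in>topspace X. f x = f y"
    proof (intro ballI)
      fix x0 y assume x0: "x0 \<in> topspace X" and y: "y \<in> topspace X"
      define E where "E = {x \<in> topspace X. f x = f x0}"
      have "closedin X {x \<in> topspace X. f x \<in> {f x0}}"
        using closedin_continuous_map_preimage[OF cf, of "{f x0}"] by simp
      then have cE: "closedin X E" unfolding E_def by simp
      have oE: "openin X E"
      proof (subst openin_subopen, intro ballI)
        fix x assume x: "x \<in> E"
        then have "x \<in> LC" using all E_def by blast
        then obtain W where W: "openin X W" "x \<in> W" "\<forall>z\<in>W. f z = f x" by (auto simp: LC_def)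
        have fx: "f x = f x0" using x E_def by blast
        have "W \<subseteq> E"
        proof
          fix w assume w: "w \<in> W"
          then have "f w = f x0" using W(3) fx by simp
          moreover have "w \<in> topspace X" using w openin_subset[OF W(1)] by blast
          ultimately show "w \<in> E" by (simp add: E_def)
        qed
        then show "\<exists>T. openin X T \<and> x \<in> T \<and> T \<subseteq> E" using W by blast
      qed
      have "E = {} \<or> E = topspace X"
        using connected_space_clopen_in[THEN iffD1, OF conn, rule_format, OF conjI[OF oE cE]] .
      moreover have "x0 \<in> E" using x0 E_def by blast
      ultimately have "E = topspace X" by blast
      then have "y \<in> E" using y by simp
      then show "f x0 = f y" unfolding E_def by simp
    qed
    then show ?thesis by blast
  qed
qed

lemma connected_fclass_all:
  assumes conn: "connected_space X" and const: "\<forall>x\<in>topspace X. \<forall>y\<in>topspace X. f x = f y"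
    and x: "x \<in> topspace X" and y: "y \<in> topspace X"
  shows "fclass X f y = fclass X f x"
proof (rule fclass_eqI)
  have h: "\<forall>z\<in>topspace X. f z = f x" using const x by blast
  have "fiber X f (f x) = topspace X" unfolding fiber_def using h by blast
  then have e: "subtopology X (fiber X f (f x)) = X" by (simp add: subtopology_topspace)
  have "connectedin X (topspace X)" using conn by (simp add: connectedin_topspace)
  then show "connected_component_of (subtopology X (fiber X f (f x))) x y"
    unfolding e connected_component_of_def using x y by blast
qed

lemma fiber_finite:
  fixes f :: "'a \<Rightarrow> ('w::banach \<Rightarrow>\<^sub>L real)"
  assumes conn: "connected_space X" and hd: "Hausdorff_space X" and nrm: "normal_space X"
    and cf: "continuous_map X euclidean f" and lcd: "has_local_convexity_data X f"
    and lfc: "locally_fiber_connected X f" and cm: "closed_map X weak_star_topology f"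
  shows "finite (fclass X f ` {x \<in> topspace X. f x = v})"
proof -
  let ?S = "{x \<in> topspace X. f x = v}"
  have t1: "t1_space X" using hd by (rule Hausdorff_imp_t1_space)
  from const_or_nowhere_lc[OF conn cf lcd]
  show ?thesis
  proof
    assume const: "\<forall>x\<in>topspace X. \<forall>y\<in>topspace X. f x = f y"
    show ?thesis
    proof (rule subsingleton_finite)
      fix a b assume "a \<in> fclass X f ` ?S" "b \<in> fclass X f ` ?S"
      then obtain x y where xy: "x \<in> topspace X" "y \<in> topspace X" "a = fclass X f x" "b = fclass X f y" by blast
      have "fclass X f y = fclass X f x" by (rule connected_fclass_all[OF conn const xy(1,2)])
      then show "a = b" using xy(3,4) by simp
    qed
  next
    assume NL: "\<forall>x W. openin X W \<and> x \<in> W \<longrightarrow> (\<exists>z\<in>W. f z \<noteq> f x)"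
    show ?thesis
    proof (rule ccontr)
      assume inf: "\<not> finite (fclass X f ` ?S)"
      obtain c :: "nat \<Rightarrow> 'a set" where c: "inj c" "range c \<subseteq> fclass X f ` ?S"
        using infinite_countable_subset[OF inf] by blast
      have "\<forall>n. \<exists>x. x \<in> topspace X \<and> f x = v \<and> fclass X f x = c n" using c(2) by blast
      from choice[OF this] obtain y where yy: "\<forall>n. y n \<in> topspace X \<and> f (y n) = v \<and> fclass X f (y n) = c n"
        by blast
      have y: "\<And>n. y n \<in> topspace X" "\<And>n. f (y n) = v" "\<And>n. fclass X f (y n) = c n"
        using yy by auto
      have injy: "inj y"
      proof (rule injI)
        fix n m assume "y n = y m"
        then have "fclass X f (y n) = fclass X f (y m)" by simp
        then have "c n = c m" using y(3) by simp
        then show "n = m" using c(1) by (simp add: inj_eq)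
      qed
      have LF: "\<exists>W. openin X W \<and> x \<in> W \<and> finite {n. y n \<in> W}" if x: "x \<in> topspace X" for x
      proof (cases "f x = v")
        case False
        define W where "W = {z \<in> topspace X. f z \<in> - {v}}"
        have oW: "openin X W" unfolding W_def
          by (rule openin_continuous_map_preimage[OF cf]) (simp add: open_Compl)
        have eW: "{n. y n \<in> W} = {}" using y(2) by (auto simp: W_def)
        have xW: "x \<in> W" using x False by (simp add: W_def)
        show ?thesis using oW xW eW by (metis finite.emptyI)
      next
        case True
        obtain U where U: "U \<subseteq> topspace X" "nbhd_in X x U" "LFC X f U"
        proof -
          have "\<exists>U\<subseteq>topspace X. nbhd_in X x U \<and> LFC X f U"
            using lfc[unfolded locally_fiber_connected_def, rule_format, OF x, of "topspace X"] x by simp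
          then show ?thesis using that by blast
        qed
        obtain W where W: "openin X W" "x \<in> W" "W \<subseteq> U" using U(2) unfolding nbhd_in_def by blast
        have lW: "LFC X f W" using LFC_subset[OF U(3) W(3)] .
        have "finite {n. y n \<in> W}"
        proof (rule subsingleton_finite)
          fix n m assume "n \<in> {n. y n \<in> W}" "m \<in> {n. y n \<in> W}"
          then have nm: "y n \<in> W" "y m \<in> W" by auto
          have "f (y n) = f (y m)" using y(2) by simp
          then have "fclass X f (y n) = fclass X f (y m)" using LFC_fclass[OF lW nm] by blast
          then have "c n = c m" using y(3) by simp
          then show "n = m" using c(1) by (simp add: inj_eq)
        qed
        then show ?thesis using W by blast
      qed
      have closedA: "closedin X A" if A: "A \<subseteq> range y" for A
      proof (rule closed_of_locfin[OF t1])
        show "A \<subseteq> topspace X" using A y(1) by blast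
        fix x assume "x \<in> topspace X"
        then obtain W where W: "openin X W" "x \<in> W" "finite {n. y n \<in> W}" using LF by blast
        have "W \<inter> A \<subseteq> y ` {n. y n \<in> W}" using A by blast
        then have "finite (W \<inter> A)" using W(3) finite_subset by blast
        then show "\<exists>W. openin X W \<and> x \<in> W \<and> finite (W \<inter> A)" using W by blast
      qed
      define D where "D = range y"
      have cD: "closedin X D" unfolding D_def by (rule closedA) simp
      define h where "h = (\<lambda>x. 1 / (real (inv y x) + 2))"
      have hy: "h (y n) = 1 / (real n + 2)" for n by (simp add: h_def inv_f_f[OF injy])
      have ch: "continuous_map (subtopology X D) euclideanreal h"
        unfolding continuous_map_closedin
      proof (intro conjI allI impI)
        show "h \<in> topspace (subtopology X D) \<rightarrow> topspace euclideanreal" by simp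
        fix C :: "real set" assume "closedin euclideanreal C"
        define P where "P = {x \<in> topspace (subtopology X D). h x \<in> C}"
        have "P \<subseteq> range y" unfolding P_def D_def by auto
        then have "closedin X P" by (rule closedA)
        moreover have "P = P \<inter> D" unfolding P_def by auto
        ultimately show "closedin (subtopology X D) {x \<in> topspace (subtopology X D). h x \<in> C}"
          unfolding closedin_subtopology P_def[symmetric] by blast
      qed
      obtain g where g: "continuous_map X euclideanreal g" "\<And>x. x \<in> D \<Longrightarrow> g x = h x"
        using Tietze_extension_realinterval[OF nrm cD is_interval_univ UNIV_not_empty ch] by auto
      have gy: "g (y n) = 1 / (real n + 2)" for n using g(2)[of "y n"] hy by (simp add: D_def)
      define Z0 where "Z0 = {x \<in> topspace X. g x \<in> {..0}}"
      have cZ0: "closedin X Z0" unfolding Z0_def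
        by (rule closedin_continuous_map_preimage[OF g(1)]) simp
      have "disjnt D Z0"
      proof -
        have "\<not> g (y n) \<le> 0" for n
        proof -
          have "1 / (real n + 2) > 0" by simp
          then show ?thesis using gy[of n] by simp
        qed
        then show ?thesis unfolding disjnt_def D_def Z0_def by auto
      qed
      then obtain G G' where GG: "openin X G" "openin X G'" "D \<subseteq> G" "Z0 \<subseteq> G'" "disjnt G G'"
        using nrm[unfolded normal_space_def, rule_format, OF conjI[OF cD conjI[OF cZ0]]] by blast
      define U where "U = (\<lambda>n::nat. G \<inter> {x \<in> topspace X. g x \<in> {..<2 / (real n + 2)}}
                      \<inter> {x \<in> topspace X. f x \<in> ball v (1 / (real n + 1))})"
      have oU: "openin X (U n)" for n
      proof -
        have "openin X {x \<in> topspace X. g x \<in> {..<2 / (real n + 2)}}"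
          by (rule openin_continuous_map_preimage[OF g(1)]) simp
        moreover have "openin X {x \<in> topspace X. f x \<in> ball v (1 / (real n + 1))}"
          by (rule openin_continuous_map_preimage[OF cf]) simp
        ultimately show ?thesis unfolding U_def using GG(1) by (intro openin_Int) auto
      qed
      have yU: "y n \<in> U n" for n
      proof -
        have "y n \<in> G" using GG(3) D_def by blast
        moreover have "g (y n) < 2 / (real n + 2)"
        proof -
          have "1 / (real n + 2) < 2 / (real n + 2)" by (intro divide_strict_right_mono) auto
          then show ?thesis using gy[of n] by simp
        qed
        moreover have "f (y n) \<in> ball v (1 / (real n + 1))" using y(2) by simp
        ultimately show ?thesis unfolding U_def using y(1) by simp
      qed
      have "\<forall>n. \<exists>z. z \<in> U n \<and> f z \<noteq> v"
      proof
        fix n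
        obtain z where "z \<in> U n" "f z \<noteq> f (y n)" using NL[rule_format, OF conjI[OF oU yU]] by blast
        then show "\<exists>z. z \<in> U n \<and> f z \<noteq> v" using y(2) by metis
      qed
      from choice[OF this] obtain z where zz: "\<forall>n. z n \<in> U n \<and> f (z n) \<noteq> v" by blast
      have z: "\<And>n. z n \<in> U n" "\<And>n. f (z n) \<noteq> v" using zz by auto
      have zX: "z n \<in> topspace X" for n using z(1)[of n] unfolding U_def by blast
      have zG: "z n \<in> G" for n using z(1)[of n] unfolding U_def by blast
      have zg: "g (z n) < 2 / (real n + 2)" for n using z(1)[of n] unfolding U_def by simp
      have zf: "f (z n) \<in> ball v (1 / (real n + 1))" for n using z(1)[of n] unfolding U_def by simp
      have cZ: "closedin X (range z)"
      proof (rule closed_of_locfin[OF t1])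
        show "range z \<subseteq> topspace X" using zX by blast
        fix x assume x: "x \<in> topspace X"
        show "\<exists>W. openin X W \<and> x \<in> W \<and> finite (W \<inter> range z)"
        proof (cases "g x \<le> 0")
          case True
          then have "x \<in> G'" using GG(4) x Z0_def by auto
          moreover have "G' \<inter> range z = {}" using zG GG(5) unfolding disjnt_def by blast
          ultimately show ?thesis using GG(2) by (intro exI[of _ G']) auto
        next
          case False
          define W where "W = {x' \<in> topspace X. g x' \<in> {g x / 2<..}}"
          have oW: "openin X W" unfolding W_def
            by (rule openin_continuous_map_preimage[OF g(1)]) simp
          have xW: "x \<in> W" using False x by (simp add: W_def)
          have sub: "{n. z n \<in> W} \<subseteq> {..nat \<lceil>4 / g x\<rceil>}"
          proof
            fix n assume "n \<in> {n. z n \<in> W}"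
            then have "g x / 2 < g (z n)" by (simp add: W_def)
            then have lt: "g x / 2 < 2 / (real n + 2)" using zg[of n] by linarith
            have gp: "g x > 0" using False by simp
            have "g x * (real n + 2) < 4" using lt gp by (simp add: field_simps)
            then have "real n < 4 / g x" using gp by (simp add: field_simps)
            then have "real n \<le> real (nat \<lceil>4 / g x\<rceil>)" by linarith
            then show "n \<in> {..nat \<lceil>4 / g x\<rceil>}" by simp
          qed
          have "W \<inter> range z \<subseteq> z ` {n. z n \<in> W}" by blast
          moreover have "finite {n. z n \<in> W}" using sub finite_subset by blast
          ultimately have "finite (W \<inter> range z)" using finite_subset by blast
          then show ?thesis using oW xW by blast
        qed
      qed
      have "closedin weak_star_topology (f ` range z)" using cm cZ unfolding closed_map_def by blast
      then have "closed (f ` range z)" by (rule weak_star_closed)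
      moreover have "v \<notin> f ` range z" using z(2) by auto
      ultimately have "open (- (f ` range z))" "v \<in> - (f ` range z)" by (auto simp: closed_def)
      then obtain e where e: "e > 0" "ball v e \<subseteq> - (f ` range z)"
        using open_contains_ball[of "- (f ` range z)"] by blast
      obtain n where n: "inverse (real (Suc n)) < e" using reals_Archimedean[OF e(1)] by blast
      have "f (z n) \<in> ball v e" using zf[of n] n by (simp add: inverse_eq_divide add.commute)
      then show False using e(2) by blast
    qed
  qed
qed

lemma fiber_set_eq:
  "{c \<in> topspace (Xf_topology X f). ftilde f c = v} = fclass X f ` {x \<in> topspace X. f x = v}"
proof
  show "{c \<in> topspace (Xf_topology X f). ftilde f c = v} \<subseteq> fclass X f ` {x \<in> topspace X. f x = v}"
  proof
    fix c assume "c \<in> {c \<in> topspace (Xf_topology X f). ftilde f c = v}"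
    then obtain x where x: "x \<in> topspace X" "c = fclass X f x" "ftilde f c = v"
      by (auto simp: topspace_Xf Xf_def)
    then have "f x = v" using ftilde_fclass[OF x(1), of f] by simp
    then show "c \<in> fclass X f ` {x \<in> topspace X. f x = v}" using x by blast
  qed
  show "fclass X f ` {x \<in> topspace X. f x = v} \<subseteq> {c \<in> topspace (Xf_topology X f). ftilde f c = v}"
  proof
    fix c assume "c \<in> fclass X f ` {x \<in> topspace X. f x = v}"
    then obtain x where x: "x \<in> topspace X" "f x = v" "c = fclass X f x" by blast
    then have "ftilde f c = v" using ftilde_fclass[OF x(1), of f] by simp
    moreover have "c \<in> topspace (Xf_topology X f)" using x by (auto simp: topspace_Xf Xf_def)
    ultimately show "c \<in> {c \<in> topspace (Xf_topology X f). ftilde f c = v}" by blast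
  qed
qed

lemma ftilde_image_eq:
  assumes "U \<subseteq> fclass X f ` topspace X"
  shows "ftilde f ` U = f ` {x \<in> topspace X. fclass X f x \<in> U}"
proof
  show "ftilde f ` U \<subseteq> f ` {x \<in> topspace X. fclass X f x \<in> U}"
  proof
    fix w assume "w \<in> ftilde f ` U"
    then obtain c where c: "c \<in> U" "w = ftilde f c" by blast
    then obtain x where x: "x \<in> topspace X" "c = fclass X f x" using assms by blast
    have "w = f x" using c x ftilde_fclass[OF x(1), of f] by simp
    then show "w \<in> f ` {x \<in> topspace X. fclass X f x \<in> U}" using x c by blast
  qed
  show "f ` {x \<in> topspace X. fclass X f x \<in> U} \<subseteq> ftilde f ` U"
  proof
    fix w assume "w \<in> f ` {x \<in> topspace X. fclass X f x \<in> U}"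
    then obtain x where x: "x \<in> topspace X" "fclass X f x \<in> U" "w = f x" by blast
    have "w = ftilde f (fclass X f x)" using x ftilde_fclass[OF x(1), of f] by simp
    then show "w \<in> ftilde f ` U" using x by blast
  qed
qed

theorem proposition2p29:
  fixes X :: "'a topology"
    and f :: "'a \<Rightarrow> ('w::banach \<Rightarrow>\<^sub>L real)"
  assumes "connected_space X" and "locally_connected_space X" and "Hausdorff_space X"
    and "normal_space X" and "first_countable X"
    and "continuous_map X euclidean f"
    and "has_local_convexity_data X f"
    and "locally_fiber_connected X f"
    and "closed_map X weak_star_topology f"
  shows "continuous_map (Xf_topology X f) euclidean (ftilde f) \<and>
         proper_map (Xf_topology X f) euclidean (ftilde f) \<and>
         continuous_map (Xf_topology X f) weak_star_topology (ftilde f) \<and>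
         proper_map (Xf_topology X f) weak_star_topology (ftilde f) \<and>
         (\<forall>p\<in>Xf X f. \<forall>r>0.
            compactin (Xf_topology X f) {q \<in> Xf X f. Xf_dist X f p q \<le> ereal r})"
proof -
  note conn = assms(1) and hd = assms(3) and nrm = assms(4) and cf = assms(6) and lcd = assms(7)
    and lfc = assms(8) and cm = assms(9)
  have c1: "continuous_map (Xf_topology X f) euclidean (ftilde f)"
    unfolding Xf_topology_def
  proof (rule continuous_map_quot)
    show "continuous_map X euclidean (\<lambda>x. ftilde f (fclass X f x))"
      using cf by (rule continuous_map_eq) (simp add: ftilde_fclass)
  qed
  have c2: "continuous_map (Xf_topology X f) weak_star_topology (ftilde f)"
    using c1 by (rule continuous_map_weak_star)
  have cw: "closed_map (Xf_topology X f) weak_star_topology (ftilde f)"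
    unfolding closed_map_def
  proof (intro allI impI)
    fix U assume "closedin (Xf_topology X f) U"
    then have U: "U \<subseteq> fclass X f ` topspace X" "closedin X {x \<in> topspace X. fclass X f x \<in> U}"
      unfolding Xf_topology_def closedin_quot by auto
    have "closedin weak_star_topology (f ` {x \<in> topspace X. fclass X f x \<in> U})"
      using cm U(2) unfolding closed_map_def by blast
    then show "closedin weak_star_topology (ftilde f ` U)" using ftilde_image_eq[OF U(1)] by simp
  qed
  have ce: "closed_map (Xf_topology X f) euclidean (ftilde f)"
    unfolding closed_map_def
  proof (intro allI impI)
    fix U assume "closedin (Xf_topology X f) U"
    then have "closedin weak_star_topology (ftilde f ` U)" using cw unfolding closed_map_def by blast
    then show "closedin euclidean (ftilde f ` U)" using weak_star_closed by auto
  qed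
  have fib: "compactin (Xf_topology X f) {c \<in> topspace (Xf_topology X f). ftilde f c = v}" for v
  proof (rule finite_imp_compactin)
    show "{c \<in> topspace (Xf_topology X f). ftilde f c = v} \<subseteq> topspace (Xf_topology X f)" by blast
    show "finite {c \<in> topspace (Xf_topology X f). ftilde f c = v}"
      unfolding fiber_set_eq using fiber_finite[OF conn hd nrm cf lcd lfc cm] .
  qed
  have pe: "proper_map (Xf_topology X f) euclidean (ftilde f)"
    unfolding proper_map_def using ce fib by blast
  have pw: "proper_map (Xf_topology X f) weak_star_topology (ftilde f)"
    unfolding proper_map_def using cw fib by blast
  have balls: "\<forall>p\<in>Xf X f. \<forall>r>0. compactin (Xf_topology X f) {q \<in> Xf X f. Xf_dist X f p q \<le> ereal r}"
  proof (intro ballI allI impI)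
    fix p and r :: real assume "p \<in> Xf X f" "r > 0"
    have K: "compactin (Xf_topology X f) {c. c \<in> topspace (Xf_topology X f) \<and> ftilde f c \<in> cball (ftilde f p) r}"
      using compactin_proper_map_preimage[OF pw weak_star_cball_compact] \<open>r > 0\<close> by simp
    have sub: "{q \<in> Xf X f. Xf_dist X f p q \<le> ereal r}
        \<subseteq> {c. c \<in> topspace (Xf_topology X f) \<and> ftilde f c \<in> cball (ftilde f p) r}"
    proof
      fix q assume q: "q \<in> {q \<in> Xf X f. Xf_dist X f p q \<le> ereal r}"
      have "Xf_dist X f p q \<le> ereal r" using q by simp
      then have "ereal (norm (ftilde f p - ftilde f q)) \<le> ereal r"
        using Xf_dist_ge_norm[of f p q X] by (rule order_trans[rotated])
      then have "dist (ftilde f p) (ftilde f q) \<le> r" by (simp add: dist_norm)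
      then show "q \<in> {c. c \<in> topspace (Xf_topology X f) \<and> ftilde f c \<in> cball (ftilde f p) r}"
        using q by (simp add: topspace_Xf)
    qed
    show "compactin (Xf_topology X f) {q \<in> Xf X f. Xf_dist X f p q \<le> ereal r}"
      by (rule closed_compactin[OF K sub ball_closed[OF cf lcd lfc]])
  qed
  show ?thesis using c1 pe c2 pw balls by blast
qed

end
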